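(* Let $(M^n,g)$ be a Riemannian manifold, $T_1,\dots,T_m$ $(1,1)$-tensors on $M$, and $Q$ a $(0,3)$-tensor on $M$; for smooth $f$ let $\mathscr L[f]=\sum_{i=1}^m\mathrm{Hess}(f)(T_i\nabla f,T_i\nabla f)+Q(\nabla f,\nabla f,\nabla f)$. Let $\Omega\subset M$ be open and $u,v$ continuous functions on $\Omega$ such that for every $\epsilon>0$ and $x\in\Omega$ there exist smooth functions $u_{x,\epsilon},v_{x,\epsilon}$ on a neighborhood $U_{x,\epsilon}$ of $x$ and a constant $c_x>0$ independent of $\epsilon$ with: (1) $u\ge u_{x,\epsilon}$ on $U_{x,\epsilon}$ and $u(x)=u_{x,\epsilon}(x)$; (2) $\mathscr L[u_{x,\epsilon}](x)\ge-\epsilon$; (3) $v\le v_{x,\epsilon}$ on $U_{x,\epsilon}$ and $v(x)=v_{x,\epsilon}(x)$; (4) $\mathscr L[v_{x,\epsilon}](x)\le\epsilon$; (5) $\sum_{i=1}^m\langle T_i\nabla u_{x,\epsilon},\nabla u_{x,\epsilon}\rangle^2(x)+\sum_{i=1}^m\langle T_i\nabla v_{x,\epsilon},\nabla v_{x,\epsilon}\rangle^2(x)\ge c_x$; (6) $v:\Omega\to(\inf_\Omega v,\sup_\Omega v)$ is proper; (7) $M_v(u,t):=\max_{x\in S_v(t)}u(x)$ is increasing in $t\in(\inf_\Omega v,\sup_\Omega v)$, where $S_v(t)=\{x\in\Omega: v(x)=t\}$. Then $M_v(u,t)$ is a convex function of $t$ on $(\inf_\Omega v,\sup_\Omega v)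$.
   Context: $\nabla f$ is the gradient, $\mathrm{Hess}(f)=\nabla df$ the Levi-Civita Hessian of $g$, $\langle\cdot,\cdot\rangle=g$. "Increasing" means non-decreasing. *)

theory Defs
  imports "HOL-Analysis.Analysis"
begin

text \<open>Smooth manifolds via a smooth atlas; tensor fields via their components in
  the charts of the atlas, subject to the usual transformation laws.
  The manifold M is the whole type 'a, of dimension CARD('n).\<close>

type_synonym ('a, 'n) chart = "'a set \<times> ('a \<Rightarrow> real^'n)"

definition is_chart :: "('a::topological_space, 'n::finite) chart \<Rightarrow> bool" where
  "is_chart c \<longleftrightarrow> (case c of (U, \<phi>) \<Rightarrow>
     open U \<and> inj_on \<phi> U \<and> open (\<phi> ` U) \<and> continuous_on U \<phi> \<and>
     continuous_on (\<phi> ` U) (inv_into U \<phi>))"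

definition loc :: "('a, 'n) chart \<Rightarrow> ('a \<Rightarrow> 'b) \<Rightarrow> real^'n \<Rightarrow> 'b" where
  "loc c h = h \<circ> inv_into (fst c) (snd c)"

definition partial :: "'n::finite \<Rightarrow> (real^'n \<Rightarrow> real) \<Rightarrow> real^'n \<Rightarrow> real" where
  "partial i F y = deriv (\<lambda>t. F (y + t *\<^sub>R axis i 1)) 0"

text \<open>C-infinity on an (open) set: all iterated partial derivatives exist and are continuous.
  D js is the iterated partial derivative along the list of directions js.\<close>
definition smooth_fn_on :: "(real^'n::finite \<Rightarrow> real) \<Rightarrow> (real^'n) set \<Rightarrow> bool" where
  "smooth_fn_on F S \<longleftrightarrow> (\<exists>D :: 'n list \<Rightarrow> real^'n \<Rightarrow> real.
     D [] = F \<and> (\<forall>js. continuous_on S (D js)) \<and>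
     (\<forall>i js y. y \<in> S \<longrightarrow>
        ((\<lambda>t. D js (y + t *\<^sub>R axis i 1)) has_real_derivative D (i # js) y) (at 0)))"

definition transition :: "('a, 'n) chart \<Rightarrow> ('a, 'n) chart \<Rightarrow> real^'n \<Rightarrow> real^'n" where
  "transition c1 c2 = loc c1 (snd c2)"

definition smooth_atlas :: "('a::topological_space, 'n::finite) chart set \<Rightarrow> bool" where
  "smooth_atlas A \<longleftrightarrow> (\<forall>c\<in>A. is_chart c) \<and> (\<Union>c\<in>A. fst c) = UNIV \<and>
     (\<forall>c1\<in>A. \<forall>c2\<in>A. \<forall>k.
        smooth_fn_on (\<lambda>y. transition c1 c2 y $ k) (snd c1 ` (fst c1 \<inter> fst c2)))"

definition smooth_on_M :: "('a::topological_space, 'n::finite) chart set \<Rightarrow> ('a \<Rightarrow> real) \<Rightarrow> 'a set \<Rightarrow> bool" where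
  "smooth_on_M A f W \<longleftrightarrow> open W \<and> (\<forall>c\<in>A. smooth_fn_on (loc c f) (snd c ` (fst c \<inter> W)))"

definition jac :: "('a, 'n::finite) chart \<Rightarrow> ('a, 'n) chart \<Rightarrow> 'a \<Rightarrow> real^'n^'n" where
  "jac c1 c2 p = (\<chi> a i. partial i (\<lambda>y. transition c1 c2 y $ a) (snd c1 p))"

definition riemannian_metric :: "('a::topological_space, 'n::finite) chart set \<Rightarrow>
    (('a, 'n) chart \<Rightarrow> 'a \<Rightarrow> real^'n^'n) \<Rightarrow> bool" where
  "riemannian_metric A g \<longleftrightarrow>
     (\<forall>c\<in>A. \<forall>p\<in>fst c. transpose (g c p) = g c p \<and>
        (\<forall>w. w \<noteq> 0 \<longrightarrow> w \<bullet> (g c p *v w) > 0)) \<and>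
     (\<forall>c\<in>A. \<forall>i j. smooth_fn_on (\<lambda>y. loc c (g c) y $ i $ j) (snd c ` fst c)) \<and>
     (\<forall>c1\<in>A. \<forall>c2\<in>A. \<forall>p\<in>fst c1 \<inter> fst c2.
        g c1 p = transpose (jac c1 c2 p) ** g c2 p ** jac c1 c2 p)"

text \<open>(1,1)-tensor field: in each chart a smooth matrix (entry (k,j) = T^k_j).\<close>
definition tensor11 :: "('a::topological_space, 'n::finite) chart set \<Rightarrow>
    (('a, 'n) chart \<Rightarrow> 'a \<Rightarrow> real^'n^'n) \<Rightarrow> bool" where
  "tensor11 A T \<longleftrightarrow>
     (\<forall>c\<in>A. \<forall>i j. smooth_fn_on (\<lambda>y. loc c (T c) y $ i $ j) (snd c ` fst c)) \<and>
     (\<forall>c1\<in>A. \<forall>c2\<in>A. \<forall>p\<in>fst c1 \<inter> fst c2.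
        jac c1 c2 p ** T c1 p = T c2 p ** jac c1 c2 p)"

definition tensor03 :: "('a::topological_space, 'n::finite) chart set \<Rightarrow>
    (('a, 'n) chart \<Rightarrow> 'a \<Rightarrow> 'n \<Rightarrow> 'n \<Rightarrow> 'n \<Rightarrow> real) \<Rightarrow> bool" where
  "tensor03 A Q \<longleftrightarrow>
     (\<forall>c\<in>A. \<forall>i j k. smooth_fn_on (\<lambda>y. loc c (Q c) y i j k) (snd c ` fst c)) \<and>
     (\<forall>c1\<in>A. \<forall>c2\<in>A. \<forall>p\<in>fst c1 \<inter> fst c2. \<forall>i j k.
        Q c1 p i j k = (\<Sum>a\<in>UNIV. \<Sum>b\<in>UNIV. \<Sum>d\<in>UNIV.
           jac c1 c2 p $ a $ i * jac c1 c2 p $ b $ j * jac c1 c2 p $ d $ k * Q c2 p a b d))"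

text \<open>A chart of the atlas around x (all quantities below are chart-independent).\<close>
definition chart_at :: "('a, 'n) chart set \<Rightarrow> 'a \<Rightarrow> ('a, 'n) chart" where
  "chart_at A x = (SOME c. c \<in> A \<and> x \<in> fst c)"

definition grad_c :: "('a, 'n::finite) chart \<Rightarrow> (('a, 'n) chart \<Rightarrow> 'a \<Rightarrow> real^'n^'n) \<Rightarrow>
    ('a \<Rightarrow> real) \<Rightarrow> 'a \<Rightarrow> real^'n" where
  "grad_c c g f x = matrix_inv (g c x) *v (\<chi> i. partial i (loc c f) (snd c x))"

definition christoffel :: "('a, 'n::finite) chart \<Rightarrow> (('a, 'n) chart \<Rightarrow> 'a \<Rightarrow> real^'n^'n) \<Rightarrow>
    'a \<Rightarrow> 'n \<Rightarrow> 'n \<Rightarrow> 'n \<Rightarrow> real" where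
  "christoffel c g x k i j = (1/2) * (\<Sum>l\<in>UNIV. matrix_inv (g c x) $ k $ l *
      (partial i (\<lambda>z. loc c (g c) z $ j $ l) (snd c x)
       + partial j (\<lambda>z. loc c (g c) z $ i $ l) (snd c x)
       - partial l (\<lambda>z. loc c (g c) z $ i $ j) (snd c x)))"

definition hess_c :: "('a, 'n::finite) chart \<Rightarrow> (('a, 'n) chart \<Rightarrow> 'a \<Rightarrow> real^'n^'n) \<Rightarrow>
    ('a \<Rightarrow> real) \<Rightarrow> 'a \<Rightarrow> 'n \<Rightarrow> 'n \<Rightarrow> real" where
  "hess_c c g f x i j = partial i (partial j (loc c f)) (snd c x)
     - (\<Sum>k\<in>UNIV. christoffel c g x k i j * partial k (loc c f) (snd c x))"

definition Lop :: "('a, 'n::finite) chart set \<Rightarrow> (('a, 'n) chart \<Rightarrow> 'a \<Rightarrow> real^'n^'n) \<Rightarrow>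
    (nat \<Rightarrow> ('a, 'n) chart \<Rightarrow> 'a \<Rightarrow> real^'n^'n) \<Rightarrow> nat \<Rightarrow>
    (('a, 'n) chart \<Rightarrow> 'a \<Rightarrow> 'n \<Rightarrow> 'n \<Rightarrow> 'n \<Rightarrow> real) \<Rightarrow> ('a \<Rightarrow> real) \<Rightarrow> 'a \<Rightarrow> real" where
  "Lop A g T m Q f x =
     (let c = chart_at A x; w = grad_c c g f x in
       (\<Sum>k\<in>{1..m}. let tw = T k c x *v w in
          \<Sum>i\<in>UNIV. \<Sum>j\<in>UNIV. hess_c c g f x i j * tw $ i * tw $ j)
       + (\<Sum>i\<in>UNIV. \<Sum>j\<in>UNIV. \<Sum>l\<in>UNIV. Q c x i j l * w $ i * w $ j * w $ l))"

definition Tgrad_sq :: "('a, 'n::finite) chart set \<Rightarrow> (('a, 'n) chart \<Rightarrow> 'a \<Rightarrow> real^'n^'n) \<Rightarrow>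
    (nat \<Rightarrow> ('a, 'n) chart \<Rightarrow> 'a \<Rightarrow> real^'n^'n) \<Rightarrow> nat \<Rightarrow> ('a \<Rightarrow> real) \<Rightarrow> 'a \<Rightarrow> real" where
  "Tgrad_sq A g T m f x =
     (let c = chart_at A x; w = grad_c c g f x in
       \<Sum>k\<in>{1..m}. ((T k c x *v w) \<bullet> (g c x *v w))\<^sup>2)"

definition vrange :: "'a set \<Rightarrow> ('a \<Rightarrow> real) \<Rightarrow> real set" where
  "vrange \<Omega> v = {t. (INF x\<in>\<Omega>. ereal (v x)) < ereal t \<and> ereal t < (SUP x\<in>\<Omega>. ereal (v x))}"

text \<open>M_v(u,t) = max of u over the level set S_v(t) (written as Sup; it is attained).\<close>
definition Mv :: "'a set \<Rightarrow> ('a \<Rightarrow> real) \<Rightarrow> ('a \<Rightarrow> real) \<Rightarrow> real \<Rightarrow> real" where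
  "Mv \<Omega> u v t = Sup (u ` {x\<in>\<Omega>. v x = t})"

end

theory Submission
  imports Defs
begin

lemma mvt_bound:
  fixes f f' :: "real \<Rightarrow> real"
  assumes der: "\<And>s. min 0 b \<le> s \<Longrightarrow> s \<le> max 0 b \<Longrightarrow> (f has_real_derivative f' s) (at s)"
    and bd: "\<And>s. min 0 b \<le> s \<Longrightarrow> s \<le> max 0 b \<Longrightarrow> \<bar>f' s\<bar> \<le> e"
  shows "\<bar>f b - f 0\<bar> \<le> e * \<bar>b\<bar>"
proof (cases b "0::real" rule: linorder_cases)
  case less
  then obtain z where z: "b < z" "z < 0" "f 0 - f b = (0 - b) * f' z"
    using MVT2[of b 0 f f'] der by fastforce
  have "\<bar>f' z\<bar> \<le> e" using bd z less by auto
  then show ?thesis using z less by (simp add: abs_mult mult.commute mult_right_mono abs_minus_commute)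
next
  case equal then show ?thesis by simp
next
  case greater
  then obtain z where z: "0 < z" "z < b" "f b - f 0 = (b - 0) * f' z"
    using MVT2[of 0 b f f'] der by fastforce
  have "\<bar>f' z\<bar> \<le> e" using bd z greater by auto
  then show ?thesis using z greater by (simp add: abs_mult mult.commute mult_right_mono)
qed

lemma norm_le_componentwise:
  fixes x y :: "real^'n"
  assumes "\<And>j. \<bar>x$j\<bar> \<le> \<bar>y$j\<bar>"
  shows "norm x \<le> norm y"
  unfolding norm_vec_def by (rule L2_set_mono) (use assms in auto)

definition hS :: "real^'n \<Rightarrow> 'n set \<Rightarrow> real^'n" where
  "hS h S = (\<chi> i. if i \<in> S then h$i else 0)"

lemma partials_step:
  fixes f :: "real^'n::finite \<Rightarrow> real"
  assumes fin: "finite S"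
    and close: "\<And>z i. z \<in> ball y r \<Longrightarrow> \<bar>d i z - d i y\<bar> \<le> e"
    and sub: "ball y r \<subseteq> V"
    and der: "\<And>i z. z \<in> V \<Longrightarrow> ((\<lambda>t. f (z + t *\<^sub>R axis i 1)) has_real_derivative d i z) (at 0)"
    and h: "norm h < r"
  shows "\<bar>f (y + hS h S) - f y - (\<Sum>i\<in>S. h$i * d i y)\<bar> \<le> e * (\<Sum>i\<in>S. \<bar>h$i\<bar>)"
  using fin
proof (induction S rule: finite_induct)
  case empty
  have "hS h {} = 0" by (simp add: hS_def vec_eq_iff)
  then show ?case by simp
next
  case (insert i S)
  define z where "z = y + hS h S"
  have eq: "y + hS h (insert i S) = z + h$i *\<^sub>R axis i 1"
    using insert(2) by (auto simp: z_def hS_def vec_eq_iff axis_def)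
  define \<phi> where "\<phi> s = f (z + s *\<^sub>R axis i 1) - s * d i y" for s
  have inball: "z + s *\<^sub>R axis i 1 \<in> ball y r" if "min 0 (h$i) \<le> s" "s \<le> max 0 (h$i)" for s
  proof -
    have "norm (z + s *\<^sub>R axis i 1 - y) \<le> norm h"
    proof (rule norm_le_componentwise)
      fix j
      show "\<bar>(z + s *\<^sub>R axis i 1 - y) $ j\<bar> \<le> \<bar>h $ j\<bar>"
        using that insert(2) by (auto simp: z_def hS_def axis_def)
    qed
    then show ?thesis using h by (simp add: dist_norm norm_minus_commute)
  qed
  have "\<bar>\<phi> (h$i) - \<phi> 0\<bar> \<le> e * \<bar>h$i\<bar>"
  proof (rule mvt_bound)
    fix s assume s: "min 0 (h$i) \<le> s" "s \<le> max 0 (h$i)"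
    let ?p = "z + s *\<^sub>R axis i 1"
    have pV: "?p \<in> V" using inball[OF s] sub by auto
    have "((\<lambda>t. f (?p + t *\<^sub>R axis i 1)) has_real_derivative d i ?p) (at 0)"
      using der[OF pV] .
    moreover have "(\<lambda>t. f (?p + t *\<^sub>R axis i 1)) = (\<lambda>t. f (z + (t + s) *\<^sub>R axis i 1))"
      by (simp add: algebra_simps scaleR_add_left)
    ultimately have "((\<lambda>t. f (z + t *\<^sub>R axis i 1)) has_real_derivative d i ?p) (at (0 + s))"
      using DERIV_shift[of "\<lambda>t. f (z + t *\<^sub>R axis i 1)" "d i ?p" 0 s] by simp
    then show "(\<phi> has_real_derivative d i ?p - d i y) (at s)"
      unfolding \<phi>_def by (auto intro!: derivative_eq_intros)
    show "\<bar>d i ?p - d i y\<bar> \<le> e" using close inball[OF s] by blast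
  qed
  then have "\<bar>f (z + h$i *\<^sub>R axis i 1) - f z - h$i * d i y\<bar> \<le> e * \<bar>h$i\<bar>"
    by (simp add: \<phi>_def z_def)
  with insert(3) show ?case
    unfolding eq using insert(1,2) by (simp add: z_def[symmetric] algebra_simps)
qed

lemma partials_frechet:
  fixes f :: "real^'n::finite \<Rightarrow> real"
  assumes V: "open V" and y: "y \<in> V"
    and cont: "\<And>i. continuous_on V (d i)"
    and der: "\<And>i z. z \<in> V \<Longrightarrow> ((\<lambda>t. f (z + t *\<^sub>R axis i 1)) has_real_derivative d i z) (at 0)"
  shows "(f has_derivative (\<lambda>h. \<Sum>i\<in>UNIV. h$i * d i y)) (at y)"
  unfolding has_derivative_at_alt
proof (intro conjI allI impI)
  have "linear (\<lambda>h::real^'n. \<Sum>i\<in>UNIV. h$i * d i y)"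
    by (rule linearI) (simp_all add: algebra_simps sum.distrib sum_distrib_left)
  then show "bounded_linear (\<lambda>h::real^'n. \<Sum>i\<in>UNIV. h$i * d i y)"
    by (simp add: linear_conv_bounded_linear)
next
  fix e :: real assume e: "e > 0"
  define N where "N = real CARD('n)"
  have N: "N > 0" by (simp add: N_def)
  define e' where "e' = e / N"
  have e': "e' > 0" using e N by (simp add: e'_def)
  have "\<forall>\<^sub>F z in at y. \<forall>i. dist (d i z) (d i y) < e'"
  proof (rule eventually_all_finite)
    fix i
    have "isCont (d i) y" using cont V y continuous_on_eq_continuous_at by blast
    then show "\<forall>\<^sub>F z in at y. dist (d i z) (d i y) < e'"
      using e' by (simp add: isCont_def tendsto_iff)
  qed
  then obtain \<rho>1 where \<rho>1: "\<rho>1 > 0" "\<And>z. z \<noteq> y \<Longrightarrow> dist z y < \<rho>1 \<Longrightarrow> \<forall>i. dist (d i z) (d i y) < e'"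
    unfolding eventually_at by auto
  obtain \<rho>2 where \<rho>2: "\<rho>2 > 0" "ball y \<rho>2 \<subseteq> V" using V y openE by blast
  define \<rho> where "\<rho> = min \<rho>1 \<rho>2"
  have close: "\<bar>d i z - d i y\<bar> \<le> e'" if "z \<in> ball y \<rho>" for z i
  proof (cases "z = y")
    case True then show ?thesis using e' by simp
  next
    case False then show ?thesis using \<rho>1(2)[of z] that
      by (auto simp: \<rho>_def dist_commute dist_real_def abs_minus_commute less_imp_le)
  qed
  have sub: "ball y \<rho> \<subseteq> V" using \<rho>2 by (auto simp: \<rho>_def)
  show "\<exists>\<delta>>0. \<forall>y'. norm (y' - y) < \<delta> \<longrightarrow>
      norm (f y' - f y - (\<Sum>i\<in>UNIV. (y' - y) $ i * d i y)) \<le> e * norm (y' - y)"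
  proof (intro exI conjI allI impI)
    show "\<rho> > 0" using \<rho>1 \<rho>2 by (simp add: \<rho>_def)
    fix y' assume h: "norm (y' - y) < \<rho>"
    have hs: "hS (y' - y) UNIV = y' - y" by (simp add: hS_def vec_eq_iff)
    have A: "\<bar>f (y + hS (y' - y) UNIV) - f y - (\<Sum>i\<in>UNIV. (y' - y)$i * d i y)\<bar>
        \<le> e' * (\<Sum>i\<in>UNIV. \<bar>(y' - y)$i\<bar>)"
      by (rule partials_step[OF _ close sub der h]) auto
    have B: "(\<Sum>i\<in>UNIV. \<bar>(y' - y)$i\<bar>) \<le> (\<Sum>i\<in>(UNIV::'n set). norm (y' - y))"
      by (rule sum_mono) (rule component_le_norm_cart)
    have C: "(\<Sum>i\<in>(UNIV::'n set). norm (y' - y)) = N * norm (y' - y)" by (simp add: N_def)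
    have "e' * (\<Sum>i\<in>UNIV. \<bar>(y' - y)$i\<bar>) \<le> e' * (N * norm (y' - y))"
      using B C e' by (metis less_imp_le mult_left_mono)
    also have "\<dots> = e * norm (y' - y)" using N by (simp add: e'_def)
    finally show "norm (f y' - f y - (\<Sum>i\<in>UNIV. (y' - y) $ i * d i y)) \<le> e * norm (y' - y)"
      using A hs by simp
  qed
qed

lemma line_deriv:
  fixes f :: "real^'n::finite \<Rightarrow> real"
  assumes "(f has_derivative (\<lambda>h. \<Sum>i\<in>UNIV. h$i * d i)) (at (y + t *\<^sub>R w))"
  shows "((\<lambda>s. f (y + s *\<^sub>R w)) has_real_derivative (\<Sum>i\<in>UNIV. w$i * d i)) (at t)"
proof -
  have l: "((\<lambda>s. y + s *\<^sub>R w) has_derivative (\<lambda>s. s *\<^sub>R w)) (at t)"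
    by (auto intro!: derivative_eq_intros)
  have "((f \<circ> (\<lambda>s. y + s *\<^sub>R w)) has_derivative ((\<lambda>h. \<Sum>i\<in>UNIV. h$i * d i) \<circ> (\<lambda>s. s *\<^sub>R w))) (at t)"
    by (rule diff_chain_at[OF l]) (use assms in simp)
  moreover have "((\<lambda>h. \<Sum>i\<in>UNIV. h$i * d i) \<circ> (\<lambda>s. s *\<^sub>R w)) = (*) (\<Sum>i\<in>UNIV. w$i * d i)"
    by (auto simp: fun_eq_iff sum_distrib_left algebra_simps)
  ultimately show ?thesis unfolding has_field_derivative_def by (simp add: o_def)
qed

lemma test1d:
  fixes h h1 :: "real \<Rightarrow> real"
  assumes \<rho>: "\<rho> > 0"
    and mx: "\<And>t. \<bar>t\<bar> < \<rho> \<Longrightarrow> h t \<le> h 0"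
    and d1: "\<And>t. \<bar>t\<bar> < \<rho> \<Longrightarrow> (h has_real_derivative h1 t) (at t)"
    and d2: "(h1 has_real_derivative h2) (at 0)"
  shows "h1 0 = 0" "h2 \<le> 0"
proof -
  show h10: "h1 0 = 0"
    by (rule DERIV_local_max[OF d1[of 0] \<rho>]) (use \<rho> mx in auto)
  show "h2 \<le> 0"
  proof (rule ccontr)
    assume "\<not> h2 \<le> 0"
    then have "h2 > 0" by simp
    from DERIV_pos_inc_right[OF d2 this] obtain \<delta> where
      \<delta>: "\<delta> > 0" "\<And>s. s > 0 \<Longrightarrow> s < \<delta> \<Longrightarrow> h1 0 < h1 (0 + s)" by blast
    define s where "s = min \<delta> \<rho> / 2"
    have s: "0 < s" "s < \<delta>" "s < \<rho>" using \<delta> \<rho> by (auto simp: s_def)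
    have dd: "(h has_real_derivative h1 x) (at x)" if "0 \<le> x" "x \<le> s" for x
      using d1[of x] that s by simp
    obtain z where z: "0 < z" "z < s" "h s - h 0 = (s - 0) * h1 z"
      using MVT2[of 0 s h h1, OF s(1) dd] by blast
    have "h1 z > 0" using \<delta>(2)[of z] z s h10 by simp
    then have "h s > h 0" using z by (simp add: algebra_simps)
    moreover have "h s \<le> h 0" using mx s by simp
    ultimately show False by simp
  qed
qed

lemma smooth_facts:
  fixes F :: "real^'n::finite \<Rightarrow> real"
  assumes V: "open V" and sm: "smooth_fn_on F V"
  obtains D where "D [] = F"
    "\<And>js y. y \<in> V \<Longrightarrow> (D js has_derivative (\<lambda>h. \<Sum>i\<in>UNIV. h$i * D (i # js) y)) (at y)"
    "\<And>i y. y \<in> V \<Longrightarrow> partial i F y = D [i] y"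
    "\<And>i j y. y \<in> V \<Longrightarrow> partial i (partial j F) y = D [i, j] y"
proof -
  from sm obtain D where D0: "D [] = F" and Dc: "\<And>js. continuous_on V (D js)"
    and Dd: "\<And>i js y. y \<in> V \<Longrightarrow> ((\<lambda>t. D js (y + t *\<^sub>R axis i 1)) has_real_derivative D (i # js) y) (at 0)"
    unfolding smooth_fn_on_def by blast
  have P1: "partial i F y = D [i] y" if "y \<in> V" for i y
    unfolding partial_def using Dd[OF that, where i=i and js="[]"] D0 by (simp add: DERIV_imp_deriv)
  have P2: "partial i (partial j F) y = D [i, j] y" if y: "y \<in> V" for i j y
  proof -
    define S where "S = (\<lambda>t. y + t *\<^sub>R axis i (1::real)) -` V"
    have "open S" unfolding S_def
      by (rule open_vimage[OF V]) (auto intro!: continuous_intros)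
    moreover have "0 \<in> S" using y by (simp add: S_def)
    moreover have "D [j] (y + t *\<^sub>R axis i 1) = partial j F (y + t *\<^sub>R axis i 1)" if "t \<in> S" for t
      using P1 that by (simp add: S_def)
    ultimately have "((\<lambda>t. partial j F (y + t *\<^sub>R axis i 1)) has_real_derivative D [i, j] y) (at 0)"
      by (rule has_field_derivative_transform_within_open[OF Dd[OF y, where i=i and js="[j]"]])
    then show ?thesis unfolding partial_def[of i "partial j F"] by (simp add: DERIV_imp_deriv)
  qed
  show ?thesis
  proof (rule that[OF D0 _ P1 P2])
    fix js y assume "y \<in> V"
    show "(D js has_derivative (\<lambda>h. \<Sum>i\<in>UNIV. h$i * D (i # js) y)) (at y)"
      by (rule partials_frechet[OF V \<open>y \<in> V\<close> Dc Dd])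
  qed
qed

lemma swap_quad:
  fixes w :: "real^'n::finite"
  shows "(\<Sum>i\<in>UNIV. \<Sum>j\<in>UNIV. w$i * w$j * a i j) = (\<Sum>i\<in>UNIV. w$i * (\<Sum>j\<in>UNIV. w$j * a j i))"
  apply (subst sum.swap)
  apply (simp add: sum_distrib_left mult.assoc mult.left_commute)
  done

lemma second_order:
  fixes F G :: "real^'n::finite \<Rightarrow> real" and \<psi> \<psi>1 \<psi>2 :: "real \<Rightarrow> real"
  assumes V: "open V" "y0 \<in> V" and smF: "smooth_fn_on F V" and smG: "smooth_fn_on G V"
    and d\<psi>: "\<And>s. (\<psi> has_real_derivative \<psi>1 s) (at s)"
    and d\<psi>1: "\<And>s. (\<psi>1 has_real_derivative \<psi>2 s) (at s)"
    and mx: "\<And>y. y \<in> V \<Longrightarrow> F y - \<psi> (G y) \<le> F y0 - \<psi> (G y0)"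
  shows "(\<Sum>i\<in>UNIV. w$i * partial i F y0) = \<psi>1 (G y0) * (\<Sum>i\<in>UNIV. w$i * partial i G y0)"
    and "(\<Sum>i\<in>UNIV. \<Sum>j\<in>UNIV. w$i * w$j * partial i (partial j F) y0)
      \<le> \<psi>1 (G y0) * (\<Sum>i\<in>UNIV. \<Sum>j\<in>UNIV. w$i * w$j * partial i (partial j G) y0)
        + \<psi>2 (G y0) * (\<Sum>i\<in>UNIV. w$i * partial i G y0)^2"
proof -
  obtain DF where DF0: "DF [] = F"
    and DFd: "\<And>js y. y \<in> V \<Longrightarrow> (DF js has_derivative (\<lambda>h. \<Sum>i\<in>UNIV. h$i * DF (i # js) y)) (at y)"
    and DF1: "\<And>i y. y \<in> V \<Longrightarrow> partial i F y = DF [i] y"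
    and DF2: "\<And>i j y. y \<in> V \<Longrightarrow> partial i (partial j F) y = DF [i, j] y"
    using smooth_facts[OF V(1) smF] by blast
  obtain DG where DG0: "DG [] = G"
    and DGd: "\<And>js y. y \<in> V \<Longrightarrow> (DG js has_derivative (\<lambda>h. \<Sum>i\<in>UNIV. h$i * DG (i # js) y)) (at y)"
    and DG1: "\<And>i y. y \<in> V \<Longrightarrow> partial i G y = DG [i] y"
    and DG2: "\<And>i j y. y \<in> V \<Longrightarrow> partial i (partial j G) y = DG [i, j] y"
    using smooth_facts[OF V(1) smG] by blast
  obtain r where r: "r > 0" "ball y0 r \<subseteq> V" using V openE by blast
  define \<rho> where "\<rho> = r / (norm w + 1)"
  have \<rho>: "\<rho> > 0" using r unfolding \<rho>_def by (intro divide_pos_pos) (auto intro: add_nonneg_pos)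
  have inV: "y0 + t *\<^sub>R w \<in> V" if t: "\<bar>t\<bar> < \<rho>" for t
  proof -
    have "\<bar>t\<bar> * norm w \<le> \<bar>t\<bar> * (norm w + 1)" by (simp add: mult_left_mono)
    also have "\<dots> < \<rho> * (norm w + 1)"
      using t by (intro mult_strict_right_mono) (auto intro: add_nonneg_pos)
    also have "\<dots> = r" unfolding \<rho>_def
      by (metis add_nonneg_pos norm_ge_zero zero_less_one less_irrefl nonzero_eq_divide_eq)
    finally have "dist y0 (y0 + t *\<^sub>R w) < r" by (simp add: dist_norm)
    then show ?thesis using r by auto
  qed
  have LF: "((\<lambda>s. DF js (y0 + s *\<^sub>R w)) has_real_derivative (\<Sum>i\<in>UNIV. w$i * DF (i # js) (y0 + t *\<^sub>R w))) (at t)"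
    if "\<bar>t\<bar> < \<rho>" for js t
    by (rule line_deriv[OF DFd[OF inV[OF that]]])
  have LG: "((\<lambda>s. DG js (y0 + s *\<^sub>R w)) has_real_derivative (\<Sum>i\<in>UNIV. w$i * DG (i # js) (y0 + t *\<^sub>R w))) (at t)"
    if "\<bar>t\<bar> < \<rho>" for js t
    by (rule line_deriv[OF DGd[OF inV[OF that]]])
  have LF0: "((\<lambda>s. DF js (y0 + s *\<^sub>R w)) has_real_derivative (\<Sum>i\<in>UNIV. w$i * DF (i # js) y0)) (at 0)" for js
    using LF[of 0 js] \<rho> by simp
  have LG0: "((\<lambda>s. DG js (y0 + s *\<^sub>R w)) has_real_derivative (\<Sum>i\<in>UNIV. w$i * DG (i # js) y0)) (at 0)" for js
    using LG[of 0 js] \<rho> by simp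
  define h where "h s = DF [] (y0 + s *\<^sub>R w) - \<psi> (DG [] (y0 + s *\<^sub>R w))" for s
  define h1 where "h1 t = (\<Sum>i\<in>UNIV. w$i * DF [i] (y0 + t *\<^sub>R w))
      - \<psi>1 (DG [] (y0 + t *\<^sub>R w)) * (\<Sum>i\<in>UNIV. w$i * DG [i] (y0 + t *\<^sub>R w))" for t
  define gG where "gG = (\<Sum>i\<in>UNIV. w$i * DG [i] y0)"
  define gGG where "gGG = (\<Sum>i\<in>UNIV. w$i * (\<Sum>j\<in>UNIV. w$j * DG [j, i] y0))"
  define gFF where "gFF = (\<Sum>i\<in>UNIV. w$i * (\<Sum>j\<in>UNIV. w$j * DF [j, i] y0))"
  have d1: "(h has_real_derivative h1 t) (at t)" if "\<bar>t\<bar> < \<rho>" for t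
    unfolding h_def h1_def
    by (rule DERIV_diff[OF LF[OF that, of "[]"] DERIV_chain2[OF d\<psi> LG[OF that, of "[]"]]])
  have k1: "((\<lambda>t. \<Sum>i\<in>UNIV. w$i * DF [i] (y0 + t *\<^sub>R w)) has_real_derivative gFF) (at 0)"
    unfolding gFF_def by (rule DERIV_sum, rule DERIV_cmult, rule LF0)
  have k2: "((\<lambda>t. \<Sum>i\<in>UNIV. w$i * DG [i] (y0 + t *\<^sub>R w)) has_real_derivative gGG) (at 0)"
    unfolding gGG_def by (rule DERIV_sum, rule DERIV_cmult, rule LG0)
  have m1: "((\<lambda>t. \<psi>1 (DG [] (y0 + t *\<^sub>R w))) has_real_derivative \<psi>2 (G y0) * gG) (at 0)"
    using DERIV_chain2[OF d\<psi>1 LG0[of "[]"]] by (simp add: DG0 gG_def)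
  have d2: "(h1 has_real_derivative gFF - (\<psi>2 (G y0) * gG * gG + gGG * \<psi>1 (G y0))) (at 0)"
  proof -
    have "(h1 has_real_derivative gFF - (\<psi>2 (G y0) * gG * (\<Sum>i\<in>UNIV. w$i * DG [i] (y0 + 0 *\<^sub>R w))
        + gGG * \<psi>1 (DG [] (y0 + 0 *\<^sub>R w)))) (at 0)"
      unfolding h1_def[abs_def] by (rule DERIV_diff[OF k1 DERIV_mult[OF m1 k2]])
    then show ?thesis by (simp add: gG_def DG0)
  qed
  have mxh: "h t \<le> h 0" if "\<bar>t\<bar> < \<rho>" for t
    using mx[OF inV[OF that]] by (simp add: h_def DF0 DG0)
  have T1: "h1 0 = 0" and T2: "gFF - (\<psi>2 (G y0) * gG * gG + gGG * \<psi>1 (G y0)) \<le> 0"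
    using test1d[OF \<rho> mxh d1 d2] by auto
  show "(\<Sum>i\<in>UNIV. w$i * partial i F y0) = \<psi>1 (G y0) * (\<Sum>i\<in>UNIV. w$i * partial i G y0)"
    using T1 V(2) by (simp add: h1_def DF1 DG1 DG0)
  have e1: "(\<Sum>i\<in>UNIV. \<Sum>j\<in>UNIV. w$i * w$j * partial i (partial j F) y0) = gFF"
    unfolding gFF_def using V(2) by (simp add: DF2 swap_quad)
  have e2: "(\<Sum>i\<in>UNIV. \<Sum>j\<in>UNIV. w$i * w$j * partial i (partial j G) y0) = gGG"
    unfolding gGG_def using V(2) by (simp add: DG2 swap_quad)
  have e3: "(\<Sum>i\<in>UNIV. w$i * partial i G y0) = gG"
    unfolding gG_def using V(2) by (simp add: DG1)
  show "(\<Sum>i\<in>UNIV. \<Sum>j\<in>UNIV. w$i * w$j * partial i (partial j F) y0)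
      \<le> \<psi>1 (G y0) * (\<Sum>i\<in>UNIV. \<Sum>j\<in>UNIV. w$i * w$j * partial i (partial j G) y0)
        + \<psi>2 (G y0) * (\<Sum>i\<in>UNIV. w$i * partial i G y0)^2"
    unfolding e1 e2 e3 using T2 by (simp add: power2_eq_square algebra_simps)
qed

lemma posdef_inv:
  fixes B :: "real^'n::finite^'n"
  assumes "\<forall>w. w \<noteq> 0 \<longrightarrow> w \<bullet> (B *v w) > 0"
  shows "B *v (matrix_inv B *v d) = d"
proof -
  have "\<forall>x. B *v x = 0 \<longrightarrow> x = 0"
    using assms by (metis inner_zero_right less_irrefl)
  then have "invertible B"
    using matrix_left_invertible_ker invertible_left_inverse by blast
  then have "B ** matrix_inv B = mat 1"
    unfolding invertible_def matrix_inv_def by (rule someI2_ex) auto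
  then show ?thesis by (simp add: matrix_vector_mul_assoc)
qed

definition Hq :: "('a, 'n::finite) chart \<Rightarrow> (('a, 'n) chart \<Rightarrow> 'a \<Rightarrow> real^'n^'n) \<Rightarrow>
    ('a \<Rightarrow> real) \<Rightarrow> 'a \<Rightarrow> real^'n \<Rightarrow> real" where
  "Hq c g f x z = (\<Sum>i\<in>UNIV. \<Sum>j\<in>UNIV. hess_c c g f x i j * z $ i * z $ j)"

lemma Hq_scale: "Hq c g f x (p *\<^sub>R z) = p^2 * Hq c g f x z"
  unfolding Hq_def by (simp add: sum_distrib_left power2_eq_square algebra_simps)

lemma Qterm_scale:
  fixes w :: "real^'n::finite"
  shows "(\<Sum>i\<in>UNIV. \<Sum>j\<in>UNIV. \<Sum>l\<in>UNIV. q i j l * (p *\<^sub>R w) $ i * (p *\<^sub>R w) $ j * (p *\<^sub>R w) $ l)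
    = p^3 * (\<Sum>i\<in>UNIV. \<Sum>j\<in>UNIV. \<Sum>l\<in>UNIV. q i j l * w $ i * w $ j * w $ l)"
  by (simp add: sum_distrib_left power3_eq_cube algebra_simps)

lemma Lop_compare:
  fixes c :: "('a, 'n::finite) chart" and Q :: "('a, 'n) chart \<Rightarrow> 'a \<Rightarrow> 'n \<Rightarrow> 'n \<Rightarrow> 'n \<Rightarrow> real"
  assumes cx: "chart_at A x0 = c"
    and pd: "\<forall>w. w \<noteq> 0 \<longrightarrow> w \<bullet> (g c x0 *v w) > 0"
    and first: "\<And>i. partial i (loc c ux) (snd c x0) = p * partial i (loc c vx) (snd c x0)"
    and second: "\<And>w. (\<Sum>i\<in>UNIV. \<Sum>j\<in>UNIV. w$i * w$j * partial i (partial j (loc c ux)) (snd c x0))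
      \<le> p * (\<Sum>i\<in>UNIV. \<Sum>j\<in>UNIV. w$i * w$j * partial i (partial j (loc c vx)) (snd c x0))
        + qq * (\<Sum>i\<in>UNIV. w$i * partial i (loc c vx) (snd c x0))^2"
  shows "Lop A g T m Q ux x0 \<le> p^3 * Lop A g T m Q vx x0 + p^2 * qq * Tgrad_sq A g T m vx x0"
    and "Tgrad_sq A g T m ux x0 = p^4 * Tgrad_sq A g T m vx x0"
proof -
  define y0 where "y0 = snd c x0"
  define dG where "dG = (\<chi> i. partial i (loc c vx) y0)"
  define wv where "wv = grad_c c g vx x0"
  have gu: "grad_c c g ux x0 = p *\<^sub>R wv"
  proof -
    have "(\<chi> i. partial i (loc c ux) (snd c x0)) = p *\<^sub>R dG"
      using first by (simp add: vec_eq_iff dG_def y0_def)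
    then show ?thesis by (simp add: grad_c_def wv_def dG_def y0_def matrix_vector_mult_scaleR)
  qed
  have gwv: "g c x0 *v wv = dG"
    unfolding wv_def grad_c_def dG_def y0_def using posdef_inv[OF pd] by simp
  have Hcmp: "Hq c g ux x0 z \<le> p * Hq c g vx x0 z + qq * (z \<bullet> (g c x0 *v wv))^2" for z
  proof -
    define \<Gamma> where "\<Gamma> i j = (\<Sum>k\<in>UNIV. christoffel c g x0 k i j * partial k (loc c vx) y0)" for i j
    have hu: "hess_c c g ux x0 i j = partial i (partial j (loc c ux)) y0 - p * \<Gamma> i j" for i j
      unfolding hess_c_def \<Gamma>_def y0_def using first by (simp add: sum_distrib_left algebra_simps)
    have hv: "hess_c c g vx x0 i j = partial i (partial j (loc c vx)) y0 - \<Gamma> i j" for i j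
      unfolding hess_c_def \<Gamma>_def y0_def by simp
    have ip: "z \<bullet> (g c x0 *v wv) = (\<Sum>i\<in>UNIV. z$i * partial i (loc c vx) y0)"
      unfolding gwv dG_def inner_vec_def by simp
    define AA where "AA = (\<Sum>i\<in>UNIV. \<Sum>j\<in>UNIV. z$i * z$j * partial i (partial j (loc c ux)) y0)"
    define CC where "CC = (\<Sum>i\<in>UNIV. \<Sum>j\<in>UNIV. z$i * z$j * partial i (partial j (loc c vx)) y0)"
    define BB where "BB = (\<Sum>i\<in>UNIV. \<Sum>j\<in>UNIV. z$i * z$j * \<Gamma> i j)"
    define XX where "XX = (\<Sum>i\<in>UNIV. z$i * partial i (loc c vx) y0)"
    have 1: "Hq c g ux x0 z = AA - p * BB"
      unfolding Hq_def hu AA_def BB_def by (simp add: sum_distrib_left sum_subtractf algebra_simps)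
    have 2: "Hq c g vx x0 z = CC - BB"
      unfolding Hq_def hv CC_def BB_def by (simp add: sum_subtractf algebra_simps)
    have 3: "AA \<le> p * CC + qq * XX^2" using second[of z] unfolding AA_def CC_def XX_def y0_def .
    have 4: "p * Hq c g vx x0 z = p * CC - p * BB" unfolding 2 by (simp add: right_diff_distrib)
    show ?thesis unfolding ip XX_def[symmetric] using 1 3 4 by linarith
  qed
  define tz where "tz k = T k c x0 *v wv" for k
  define Qv where "Qv = (\<Sum>i\<in>UNIV. \<Sum>j\<in>UNIV. \<Sum>l\<in>UNIV. Q c x0 i j l * wv $ i * wv $ j * wv $ l)"
  have hlp: "(\<Sum>i\<in>UNIV. \<Sum>j\<in>UNIV. hess_c c g ux x0 i j * (T k c x0 *v (p *\<^sub>R wv)) $ i * (T k c x0 *v (p *\<^sub>R wv)) $ j)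
      = p^2 * Hq c g ux x0 (tz k)" for k
    unfolding matrix_vector_mult_scaleR tz_def Hq_scale[symmetric] by (simp only: Hq_def)
  have Lu: "Lop A g T m Q ux x0 = (\<Sum>k\<in>{1..m}. p^2 * Hq c g ux x0 (tz k)) + p^3 * Qv"
    unfolding Lop_def Let_def cx gu Qterm_scale Qv_def hlp ..
  have Lv: "Lop A g T m Q vx x0 = (\<Sum>k\<in>{1..m}. Hq c g vx x0 (tz k)) + Qv"
    unfolding Lop_def Let_def cx Qv_def by (simp add: tz_def Hq_def wv_def)
  have Tv: "Tgrad_sq A g T m vx x0 = (\<Sum>k\<in>{1..m}. (tz k \<bullet> (g c x0 *v wv))^2)"
    unfolding Tgrad_sq_def Let_def cx by (simp add: tz_def wv_def)
  have "(\<Sum>k\<in>{1..m}. p^2 * Hq c g ux x0 (tz k))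
      \<le> (\<Sum>k\<in>{1..m}. p^2 * (p * Hq c g vx x0 (tz k) + qq * (tz k \<bullet> (g c x0 *v wv))^2))"
    by (rule sum_mono) (simp add: Hcmp mult_left_mono)
  also have "\<dots> = p^3 * (\<Sum>k\<in>{1..m}. Hq c g vx x0 (tz k)) + p^2 * qq * (\<Sum>k\<in>{1..m}. (tz k \<bullet> (g c x0 *v wv))^2)"
    by (simp add: sum.distrib sum_distrib_left power3_eq_cube power2_eq_square algebra_simps)
  finally show "Lop A g T m Q ux x0 \<le> p^3 * Lop A g T m Q vx x0 + p^2 * qq * Tgrad_sq A g T m vx x0"
    unfolding Lu Lv Tv by (simp add: algebra_simps)
  show "Tgrad_sq A g T m ux x0 = p^4 * Tgrad_sq A g T m vx x0"
    unfolding Tgrad_sq_def Let_def cx gu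
    by (simp add: matrix_vector_mult_scaleR sum_distrib_left wv_def power_mult_distrib
        flip: power2_eq_square)
qed

lemma smooth_fn_on_mono:
  assumes "smooth_fn_on F S" "S' \<subseteq> S" shows "smooth_fn_on F S'"
proof -
  obtain D where "D [] = F" "\<forall>js. continuous_on S (D js)"
    "\<forall>i js y. y \<in> S \<longrightarrow> ((\<lambda>t. D js (y + t *\<^sub>R axis i 1)) has_real_derivative D (i # js) y) (at 0)"
    using assms(1) unfolding smooth_fn_on_def by blast
  then show ?thesis unfolding smooth_fn_on_def using assms(2)
    by (intro exI[of _ D]) (auto intro: continuous_on_subset)
qed

lemma chart_open_image:
  assumes "is_chart (Uc, \<phi>)" "open W" "W \<subseteq> Uc"
  shows "open (\<phi> ` W)"
proof -
  have inj: "inj_on \<phi> Uc" and o: "open (\<phi> ` Uc)" and ct: "continuous_on (\<phi> ` Uc) (inv_into Uc \<phi>)"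
    using assms(1) unfolding is_chart_def by auto
  have eq: "\<phi> ` W = inv_into Uc \<phi> -` W \<inter> \<phi> ` Uc"
  proof
    show "\<phi> ` W \<subseteq> inv_into Uc \<phi> -` W \<inter> \<phi> ` Uc" using inj assms(3) by auto
    show "inv_into Uc \<phi> -` W \<inter> \<phi> ` Uc \<subseteq> \<phi> ` W"
    proof
      fix y assume y: "y \<in> inv_into Uc \<phi> -` W \<inter> \<phi> ` Uc"
      then have "y = \<phi> (inv_into Uc \<phi> y)" by (simp add: f_inv_into_f)
      then show "y \<in> \<phi> ` W" using y by blast
    qed
  qed
  show ?thesis unfolding eq using ct o assms(2) continuous_on_open_vimage by blast
qed

lemma chart_at_props:
  assumes "smooth_atlas A"
  shows "chart_at A x \<in> A" "x \<in> fst (chart_at A x)"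
proof -
  have "\<exists>c. c \<in> A \<and> x \<in> fst c" using assms unfolding smooth_atlas_def by blast
  then have "chart_at A x \<in> A \<and> x \<in> fst (chart_at A x)"
    unfolding chart_at_def by (rule someI_ex)
  then show "chart_at A x \<in> A" "x \<in> fst (chart_at A x)" by auto
qed

lemma sum_axis: "(\<Sum>j\<in>UNIV. axis i (1::real) $ j * X j) = X i"
proof -
  have "(\<Sum>j\<in>UNIV. axis i (1::real) $ j * X j) = (\<Sum>j\<in>UNIV. if j = i then X j else 0)"
    by (rule sum.cong) (auto simp: axis_def)
  then show ?thesis by simp
qed

lemma local_ineq:
  fixes A :: "('a::topological_space, 'n::finite) chart set"
    and \<psi> \<psi>1 \<psi>2 :: "real \<Rightarrow> real"
    and Q :: "('a, 'n) chart \<Rightarrow> 'a \<Rightarrow> 'n \<Rightarrow> 'n \<Rightarrow> 'n \<Rightarrow> real"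
  assumes atlas: "smooth_atlas A" and metric: "riemannian_metric A g"
    and W: "open W" "x0 \<in> W" "W \<subseteq> U"
    and smu: "smooth_on_M A ux U" and smv: "smooth_on_M A vx U"
    and d\<psi>: "\<And>s. (\<psi> has_real_derivative \<psi>1 s) (at s)"
    and d\<psi>1: "\<And>s. (\<psi>1 has_real_derivative \<psi>2 s) (at s)"
    and lt: "vx x0 < t2"
    and mx: "\<And>y. y \<in> W \<Longrightarrow> vx y < t2 \<Longrightarrow> ux y - \<psi> (vx y) \<le> ux x0 - \<psi> (vx x0)"
  shows "Lop A g T m Q ux x0 \<le> (\<psi>1 (vx x0))^3 * Lop A g T m Q vx x0
           + (\<psi>1 (vx x0))^2 * \<psi>2 (vx x0) * Tgrad_sq A g T m vx x0"
    and "Tgrad_sq A g T m ux x0 = (\<psi>1 (vx x0))^4 * Tgrad_sq A g T m vx x0"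
proof -
  define c where "c = chart_at A x0"
  obtain Uc \<phi> where c_eq: "c = (Uc, \<phi>)" by fastforce
  have cA: "c \<in> A" and x0U: "x0 \<in> Uc" using chart_at_props[OF atlas, of x0] unfolding c_def[symmetric] c_eq by auto
  have ch: "is_chart (Uc, \<phi>)" using atlas cA unfolding smooth_atlas_def c_eq by blast
  then have inj: "inj_on \<phi> Uc" and oUc: "open Uc" unfolding is_chart_def by auto
  define F where "F = loc c ux"
  define G where "G = loc c vx"
  define y0 where "y0 = \<phi> x0"
  have locF: "F (\<phi> x) = ux x" if "x \<in> Uc" for x using inj that by (simp add: F_def loc_def c_eq)
  have locG: "G (\<phi> x) = vx x" if "x \<in> Uc" for x using inj that by (simp add: G_def loc_def c_eq)
  define V0 where "V0 = \<phi> ` (Uc \<inter> W)"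
  have oV0: "open V0" unfolding V0_def by (rule chart_open_image[OF ch]) (use W oUc in auto)
  have "smooth_fn_on (loc (Uc, \<phi>) ux) (\<phi> ` (Uc \<inter> U))"
    using smu cA unfolding smooth_on_M_def c_eq by (metis fst_conv snd_conv)
  then have smF0: "smooth_fn_on F V0"
    unfolding F_def V0_def c_eq by (rule smooth_fn_on_mono) (use W in blast)
  have "smooth_fn_on (loc (Uc, \<phi>) vx) (\<phi> ` (Uc \<inter> U))"
    using smv cA unfolding smooth_on_M_def c_eq by (metis fst_conv snd_conv)
  then have smG0: "smooth_fn_on G V0"
    unfolding G_def V0_def c_eq by (rule smooth_fn_on_mono) (use W in blast)
  have cG: "continuous_on V0 G"
  proof -
    obtain D where D: "D [] = G" "\<And>js. continuous_on V0 (D js)"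
      and "\<And>i js y. y \<in> V0 \<Longrightarrow> ((\<lambda>t. D js (y + t *\<^sub>R axis i 1)) has_real_derivative D (i # js) y) (at 0)"
      using smG0 unfolding smooth_fn_on_def by blast
    show ?thesis using D(2)[of "[]"] unfolding D(1) .
  qed
  define V where "V = G -` {..<t2} \<inter> V0"
  have "\<forall>B. open B \<longrightarrow> open (G -` B \<inter> V0)"
    using continuous_on_open_vimage[OF oV0, of G] cG by simp
  then have oV: "open V" unfolding V_def using open_lessThan by blast
  have y0V: "y0 \<in> V" unfolding V_def V0_def y0_def using x0U W lt locG by auto
  have smF: "smooth_fn_on F V" by (rule smooth_fn_on_mono[OF smF0]) (auto simp: V_def)
  have smG: "smooth_fn_on G V" by (rule smooth_fn_on_mono[OF smG0]) (auto simp: V_def)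
  have mxV: "F y - \<psi> (G y) \<le> F y0 - \<psi> (G y0)" if yV: "y \<in> V" for y
  proof -
    obtain x where x: "x \<in> Uc" "x \<in> W" "y = \<phi> x" using yV unfolding V_def V0_def by auto
    have "vx x < t2" using yV x locG unfolding V_def by auto
    then show ?thesis using mx[OF x(2)] x locF locG x0U by (simp add: y0_def)
  qed
  have Gy0: "G y0 = vx x0" using locG x0U by (simp add: y0_def)
  note so = second_order[OF oV y0V smF smG d\<psi> d\<psi>1 mxV]
  have first: "partial i (loc c ux) (snd c x0) = \<psi>1 (vx x0) * partial i (loc c vx) (snd c x0)" for i
    using so(1)[of "axis i 1"] unfolding sum_axis Gy0 by (simp add: F_def G_def y0_def c_eq)
  have second: "(\<Sum>i\<in>UNIV. \<Sum>j\<in>UNIV. w$i * w$j * partial i (partial j (loc c ux)) (snd c x0))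
      \<le> \<psi>1 (vx x0) * (\<Sum>i\<in>UNIV. \<Sum>j\<in>UNIV. w$i * w$j * partial i (partial j (loc c vx)) (snd c x0))
        + \<psi>2 (vx x0) * (\<Sum>i\<in>UNIV. w$i * partial i (loc c vx) (snd c x0))^2" for w
    using so(2)[of w] unfolding Gy0 by (simp add: F_def G_def y0_def c_eq)
  have pd: "\<forall>w. w \<noteq> 0 \<longrightarrow> w \<bullet> (g c x0 *v w) > 0"
  proof -
    have "\<forall>c\<in>A. \<forall>p\<in>fst c. transpose (g c p) = g c p \<and> (\<forall>w. w \<noteq> 0 \<longrightarrow> w \<bullet> (g c p *v w) > 0)"
      using metric unfolding riemannian_metric_def by blast
    then show ?thesis using cA x0U unfolding c_eq by (metis fst_conv)
  qed
  note lc1 = Lop_compare(1)[where A=A and c=c and g=g and ux=ux and vx=vx and p="\<psi>1 (vx x0)"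
      and qq="\<psi>2 (vx x0)" and T=T and m=m and Q=Q, OF c_def[symmetric] pd first second]
  note lc2 = Lop_compare(2)[where A=A and c=c and g=g and ux=ux and vx=vx and p="\<psi>1 (vx x0)"
      and qq="\<psi>2 (vx x0)" and T=T and m=m, OF c_def[symmetric] pd first second]
  show "Lop A g T m Q ux x0 \<le> (\<psi>1 (vx x0))^3 * Lop A g T m Q vx x0
           + (\<psi>1 (vx x0))^2 * \<psi>2 (vx x0) * Tgrad_sq A g T m vx x0"
    using lc1 by simp
  show "Tgrad_sq A g T m ux x0 = (\<psi>1 (vx x0))^4 * Tgrad_sq A g T m vx x0"
    using lc2 by simp
qed


lemma conv_from_key:
  fixes t1 t2 t t0 M0 M1 M2 :: real
  assumes "t1 < t2" "t0 = (1 - t) * t1 + t * t2"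
    and "M0 * (t2 - t1) \<le> M1 * (t2 - t0) + M2 * (t0 - t1)"
  shows "M0 \<le> (1 - t) * M1 + t * M2"
proof -
  have "M1 * (t2 - t0) + M2 * (t0 - t1) = ((1 - t) * M1 + t * M2) * (t2 - t1)"
    unfolding assms(2) by (simp add: algebra_simps)
  then have "M0 * (t2 - t1) \<le> ((1 - t) * M1 + t * M2) * (t2 - t1)" using assms(3) by simp
  then show ?thesis using assms(1) by (simp add: mult_le_cancel_right)
qed

lemma final_arith:
  fixes X S Su Lu Lv p c e :: real
  assumes X: "X > 0" and p: "p > 0" and c: "c > 0"
    and e: "e = X * c / ((1 + p^4) * (1 + p^3))"
    and L1: "Lu \<le> p^3 * Lv + p^2 * (- 2 * \<delta>) * S" and Xd: "X = \<delta> * p^2"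
    and Su: "Su = p^4 * S"
    and hu: "Lu \<ge> - e" and hv: "Lv \<le> e" and hc: "Su + S \<ge> c"
  shows False
proof -
  have p3: "p^3 > 0" "p^4 > 0" using p by auto
  have "p^3 * Lv \<le> p^3 * e" using hv p3 by (simp add: mult_left_mono)
  then have A1: "2 * X * S \<le> e * (1 + p^3)" using L1 hu Xd by (simp add: algebra_simps)
  have cS: "c \<le> (1 + p^4) * S" using hc Su by (simp add: algebra_simps)
  have Spos: "S > 0"
  proof -
    have "(1 + p^4) * S > 0" using cS c by linarith
    then show ?thesis using p3 by (simp add: zero_less_mult_iff)
  qed
  have ne0: "(1 + p^4) > 0" "(1 + p^3) > 0" using p3 by linarith+
  then have ne: "(1 + p^4) \<noteq> 0" "(1 + p^3) \<noteq> 0" by linarith+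
  have gen: "Y / (AA * BB) * BB = Y / AA" if "BB \<noteq> 0" for Y AA BB :: real
    using that by (cases "AA = 0") (simp_all add: field_simps)
  have E: "e * (1 + p^3) = X * (c / (1 + p^4))" unfolding e using gen[OF ne(2), of "X * c" "1 + p^4"] by simp
  have F: "c / (1 + p^4) \<le> S" using cS ne0(1) by (simp add: pos_divide_le_eq mult.commute)
  have G: "X * (c / (1 + p^4)) \<le> X * S" using F X by (intro mult_left_mono) auto
  have "2 * X * S \<le> X * S" using A1 E G by linarith
  moreover have "X * S > 0" using X Spos by simp
  ultimately show False by linarith
qed


theorem theorem3p3:
  fixes A :: "('a::{t2_space, second_countable_topology}, 'n::finite) chart set"
    and g :: "('a, 'n) chart \<Rightarrow> 'a \<Rightarrow> real^'n^'n"
    and T :: "nat \<Rightarrow> ('a, 'n) chart \<Rightarrow> 'a \<Rightarrow> real^'n^'n"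
    and m :: nat
    and Q :: "('a, 'n) chart \<Rightarrow> 'a \<Rightarrow> 'n \<Rightarrow> 'n \<Rightarrow> 'n \<Rightarrow> real"
    and \<Omega> :: "'a set"
    and u v :: "'a \<Rightarrow> real"
  assumes atlas: "smooth_atlas A"
    and metric: "riemannian_metric A g"
    and tensT: "\<forall>k\<in>{1..m}. tensor11 A (T k)"
    and tensQ: "tensor03 A Q"
    and \<Omega>_open: "open \<Omega>"
    and u_cont: "continuous_on \<Omega> u"
    and v_cont: "continuous_on \<Omega> v"
    and tests: "\<forall>x\<in>\<Omega>. \<exists>c>0. \<forall>\<epsilon>>0. \<exists>U ux vx.
        open U \<and> x \<in> U \<and> U \<subseteq> \<Omega> \<and> smooth_on_M A ux U \<and> smooth_on_M A vx U \<and>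
        (\<forall>y\<in>U. ux y \<le> u y) \<and> u x = ux x \<and>
        Lop A g T m Q ux x \<ge> - \<epsilon> \<and>
        (\<forall>y\<in>U. v y \<le> vx y) \<and> v x = vx x \<and>
        Lop A g T m Q vx x \<le> \<epsilon> \<and>
        Tgrad_sq A g T m ux x + Tgrad_sq A g T m vx x \<ge> c"
    and v_into: "v ` \<Omega> \<subseteq> vrange \<Omega> v"
    and v_proper: "\<forall>K. compact K \<and> K \<subseteq> vrange \<Omega> v \<longrightarrow> compact (\<Omega> \<inter> v -` K)"
    and level_nonempty: "\<forall>t\<in>vrange \<Omega> v. {x\<in>\<Omega>. v x = t} \<noteq> {}"
    and Mv_mono: "mono_on (vrange \<Omega> v) (Mv \<Omega> u v)"
  shows "convex_on (vrange \<Omega> v) (Mv \<Omega> u v)"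
proof -
  define I where "I = vrange \<Omega> v"
  define M where "M = Mv \<Omega> u v"
  have intv: "x \<in> I" if "a \<in> I" "b \<in> I" "a \<le> x" "x \<le> b" for a b x
  proof -
    have "ereal a \<le> ereal x" "ereal x \<le> ereal b" using that by auto
    have "(INF x\<in>\<Omega>. ereal (v x)) < ereal a" "ereal b < (SUP x\<in>\<Omega>. ereal (v x))"
      using that(1,2) unfolding I_def vrange_def by auto
    with \<open>ereal a \<le> ereal x\<close> \<open>ereal x \<le> ereal b\<close>
    have "(INF x\<in>\<Omega>. ereal (v x)) < ereal x" "ereal x < (SUP x\<in>\<Omega>. ereal (v x))"
      using less_le_trans le_less_trans by blast+
    then show ?thesis unfolding I_def vrange_def by simp
  qed
  have convI: "convex I"
    unfolding is_interval_convex_1[symmetric] is_interval_1 using intv by blast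
  have lvl: "\<Omega> \<inter> v -` {t} = {x\<in>\<Omega>. v x = t}" for t by auto
  have bdd: "bdd_above (u ` {x\<in>\<Omega>. v x = t})" if "t \<in> I" for t
  proof -
    have "compact (\<Omega> \<inter> v -` {t})" using v_proper that unfolding I_def by auto
    then have cl: "compact {x\<in>\<Omega>. v x = t}" unfolding lvl .
    have "compact (u ` {x\<in>\<Omega>. v x = t})"
      by (rule compact_continuous_image[OF continuous_on_subset[OF u_cont] cl]) auto
    then show ?thesis by (intro bounded_imp_bdd_above compact_imp_bounded)
  qed
  have upper: "u x \<le> M t" if "t \<in> I" "x \<in> \<Omega>" "v x = t" for t x
    unfolding M_def Mv_def using bdd[OF that(1)] that by (intro cSup_upper) auto
  have attain: "\<exists>x\<in>\<Omega>. v x = t \<and> s < u x" if "t \<in> I" "s < M t" for t s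
  proof -
    have ne: "u ` {x\<in>\<Omega>. v x = t} \<noteq> {}" using level_nonempty that(1) unfolding I_def by auto
    have "\<exists>y\<in>u ` {x\<in>\<Omega>. v x = t}. s < y"
      using that(2) less_cSup_iff[OF ne bdd[OF that(1)]] unfolding M_def Mv_def by blast
    then show ?thesis by auto
  qed
  have key: "M t0 * (t2 - t1) \<le> M t1 * (t2 - t0) + M t2 * (t0 - t1)"
    if t1I: "t1 \<in> I" and t2I: "t2 \<in> I" and t10: "t1 < t0" and t02: "t0 < t2" for t1 t0 t2
  proof (rule ccontr)
    assume "\<not> ?thesis"
    then have viol: "M t0 * (t2 - t1) > M t1 * (t2 - t0) + M t2 * (t0 - t1)" by simp
    have t0I: "t0 \<in> I" using intv[OF t1I t2I] t10 t02 by auto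
    have subI: "{t1..t2} \<subseteq> I" using intv[OF t1I t2I] by auto
    have m10: "M t1 \<le> M t0" using Mv_mono t1I t0I t10 unfolding M_def I_def by (auto intro: mono_onD)
    have m02: "M t0 \<le> M t2" using Mv_mono t2I t0I t02 unfolding M_def I_def by (auto intro: mono_onD)
    define a where "a = (M t2 - M t1) / (t2 - t1)"
    have lt12: "M t1 < M t2"
    proof (rule ccontr)
      assume "\<not> M t1 < M t2"
      then have "M t1 = M t0" "M t2 = M t0" using m10 m02 by auto
      then have "M t1 * (t2 - t0) + M t2 * (t0 - t1) = M t0 * (t2 - t1)" by (simp add: algebra_simps)
      then show False using viol by simp
    qed
    have a: "a > 0" unfolding a_def using lt12 t10 t02 by simp
    have aeq: "a * (t2 - t1) = M t2 - M t1" unfolding a_def using t10 t02 by simp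
    define lin where "lin s = M t1 + a * (s - t1)" for s
    have "lin t0 * (t2 - t1) = M t1 * (t2 - t0) + M t2 * (t0 - t1)"
    proof -
      have "lin t0 * (t2 - t1) = M t1 * (t2 - t1) + (a * (t2 - t1)) * (t0 - t1)"
        by (simp add: lin_def algebra_simps)
      also have "\<dots> = M t1 * (t2 - t0) + M t2 * (t0 - t1)" unfolding aeq by (simp add: algebra_simps)
      finally show ?thesis .
    qed
    then have "lin t0 * (t2 - t1) < M t0 * (t2 - t1)" using viol by simp
    then have gap0: "lin t0 < M t0" using t10 t02 by (simp add: mult_less_cancel_right)
    define gap where "gap = M t0 - lin t0"
    have gap: "gap > 0" using gap0 by (simp add: gap_def)
    define \<delta> where "\<delta> = min (a / (2 * (t2 - t1))) (gap / (2 * ((t0 - t1) * (t2 - t0))))"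
    have \<delta>pos: "\<delta> > 0" unfolding \<delta>_def using a gap t10 t02 by simp
    have \<delta>1: "\<delta> * (t2 - t1) \<le> a / 2"
    proof -
      have "\<delta> \<le> a / (2 * (t2 - t1))" unfolding \<delta>_def by simp
      then show ?thesis using t10 t02 by (simp add: pos_le_divide_eq algebra_simps)
    qed
    have \<delta>2: "\<delta> * ((t0 - t1) * (t2 - t0)) \<le> gap / 2"
    proof -
      have "\<delta> \<le> gap / (2 * ((t0 - t1) * (t2 - t0)))" unfolding \<delta>_def by simp
      moreover have "(t0 - t1) * (t2 - t0) > 0" using t10 t02 by simp
      ultimately show ?thesis by (simp add: pos_le_divide_eq mult.commute)
    qed
    define \<psi> where "\<psi> s = lin s + \<delta> * ((s - t1) * (t2 - s))" for s
    define \<psi>1 where "\<psi>1 s = a + \<delta> * (t1 + t2 - 2 * s)" for s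
    define \<psi>2 where "\<psi>2 s = - 2 * \<delta>" for s :: real
    have d\<psi>: "(\<psi> has_real_derivative \<psi>1 s) (at s)" for s
      unfolding \<psi>_def[abs_def] \<psi>1_def lin_def
      by (auto intro!: derivative_eq_intros simp: algebra_simps)
    have d\<psi>1: "(\<psi>1 has_real_derivative \<psi>2 s) (at s)" for s
      unfolding \<psi>1_def[abs_def] \<psi>2_def
      by (auto intro!: derivative_eq_intros simp: algebra_simps)
    have \<psi>t1: "\<psi> t1 = M t1" by (simp add: \<psi>_def lin_def)
    have \<psi>t2: "\<psi> t2 = M t2" using aeq by (simp add: \<psi>_def lin_def)
    have \<psi>t0: "\<psi> t0 < M t0" using \<delta>2 gap unfolding \<psi>_def gap_def by simp
    have \<psi>mono: "\<psi> r \<le> \<psi> s" if "t1 \<le> r" "r \<le> s" "s \<le> t2" for r s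
    proof -
      have eq: "\<psi> s - \<psi> r = (s - r) * (a + \<delta> * (t1 + t2 - s - r))"
        by (simp add: \<psi>_def lin_def algebra_simps)
      have "\<delta> * (t1 + t2 - s - r) \<ge> \<delta> * (t1 - t2)"
        using that \<delta>pos by (intro mult_left_mono) auto
      then have "a + \<delta> * (t1 + t2 - s - r) \<ge> 0" using \<delta>1 a by (simp add: algebra_simps)
      then have "(s - r) * (a + \<delta> * (t1 + t2 - s - r)) \<ge> 0" using that by simp
      then show ?thesis using eq by simp
    qed
    have \<psi>1pos: "\<psi>1 s > 0" if "t1 \<le> s" "s \<le> t2" for s
    proof -
      have "\<delta> * (t1 + t2 - 2 * s) \<ge> \<delta> * (t1 - t2)"
        using that \<delta>pos by (intro mult_left_mono) auto
      then show ?thesis using \<delta>1 a unfolding \<psi>1_def by (simp add: algebra_simps)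
    qed
    define K where "K = \<Omega> \<inter> v -` {t1..t2}"
    have cK: "compact K" unfolding K_def using v_proper subI unfolding I_def by auto
    define \<Phi> where "\<Phi> x = u x - \<psi> (v x)" for x
    have KO: "K \<subseteq> \<Omega>" by (auto simp: K_def)
    have contK: "continuous_on K \<Phi>"
    proof -
      have cu: "continuous_on K u" and cv: "continuous_on K v"
        using continuous_on_subset[OF u_cont KO] continuous_on_subset[OF v_cont KO] by auto
      show ?thesis unfolding \<Phi>_def[abs_def] \<psi>_def lin_def
        by (intro continuous_intros cu cv)
    qed
    obtain y where y: "y \<in> \<Omega>" "v y = t0" "\<psi> t0 < u y" using attain[OF t0I \<psi>t0] by blast
    have yK: "y \<in> K" using y t10 t02 by (auto simp: K_def)
    obtain x0 where x0: "x0 \<in> K" "\<And>z. z \<in> K \<Longrightarrow> \<Phi> z \<le> \<Phi> x0"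
      using continuous_attains_sup[OF cK _ contK] yK by blast
    have \<Phi>x0: "\<Phi> x0 > 0" using x0(2)[OF yK] y by (simp add: \<Phi>_def)
    have x0O: "x0 \<in> \<Omega>" and x0r: "t1 \<le> v x0" "v x0 \<le> t2" using x0(1) by (auto simp: K_def)
    have ne1: "v x0 \<noteq> t1"
    proof
      assume h: "v x0 = t1"
      have "u x0 \<le> M t1" using upper[OF t1I x0O h] .
      then show False using \<Phi>x0 h \<psi>t1 by (simp add: \<Phi>_def)
    qed
    have ne2: "v x0 \<noteq> t2"
    proof
      assume h: "v x0 = t2"
      have "u x0 \<le> M t2" using upper[OF t2I x0O h] .
      then show False using \<Phi>x0 h \<psi>t2 by (simp add: \<Phi>_def)
    qed
    have x0s: "t1 < v x0" "v x0 < t2" using x0r ne1 ne2 by auto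
    define W0 where "W0 = v -` {t1<..<t2} \<inter> \<Omega>"
    have oW0: "open W0"
    proof -
      have "\<forall>B. open B \<longrightarrow> open (v -` B \<inter> \<Omega>)"
        using continuous_on_open_vimage[OF \<Omega>_open, of v] v_cont by simp
      then show ?thesis unfolding W0_def using open_greaterThanLessThan by blast
    qed
    have x0W0: "x0 \<in> W0" using x0s x0O by (simp add: W0_def)
    have W0K: "W0 \<subseteq> K" by (auto simp: W0_def K_def)
    define p where "p = \<psi>1 (v x0)"
    have p: "p > 0" unfolding p_def using \<psi>1pos x0r by simp
    obtain c where c: "c > 0" and cf: "\<forall>\<epsilon>>0. \<exists>U ux vx.
        open U \<and> x0 \<in> U \<and> U \<subseteq> \<Omega> \<and> smooth_on_M A ux U \<and> smooth_on_M A vx U \<and>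
        (\<forall>y\<in>U. ux y \<le> u y) \<and> u x0 = ux x0 \<and>
        Lop A g T m Q ux x0 \<ge> - \<epsilon> \<and>
        (\<forall>y\<in>U. v y \<le> vx y) \<and> v x0 = vx x0 \<and>
        Lop A g T m Q vx x0 \<le> \<epsilon> \<and>
        Tgrad_sq A g T m ux x0 + Tgrad_sq A g T m vx x0 \<ge> c"
      using bspec[OF tests x0O] by (elim exE conjE) (rule that)
    define X where "X = \<delta> * p^2"
    have X: "X > 0" using \<delta>pos p by (simp add: X_def)
    define e where "e = X * c / ((1 + p^4) * (1 + p^3))"
    have e: "e > 0" unfolding e_def using X c p by (intro divide_pos_pos mult_pos_pos) (auto intro: add_pos_pos)
    obtain U ux vx where U: "open U" "x0 \<in> U" "U \<subseteq> \<Omega>" and smu: "smooth_on_M A ux U"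
      and smv: "smooth_on_M A vx U" and uxle: "\<forall>y\<in>U. ux y \<le> u y" and ux0: "u x0 = ux x0"
      and Lu: "Lop A g T m Q ux x0 \<ge> - e" and vxge: "\<forall>y\<in>U. v y \<le> vx y" and vx0: "v x0 = vx x0"
      and Lv: "Lop A g T m Q vx x0 \<le> e"
      and Sc: "Tgrad_sq A g T m ux x0 + Tgrad_sq A g T m vx x0 \<ge> c"
      using cf[rule_format, OF e] by (elim exE conjE) (rule that)
    define W where "W = U \<inter> W0"
    have oW: "open W" using U oW0 by (simp add: W_def open_Int)
    have x0W: "x0 \<in> W" using U x0W0 by (simp add: W_def)
    have WU: "W \<subseteq> U" by (simp add: W_def)
    have mx: "ux y - \<psi> (vx y) \<le> ux x0 - \<psi> (vx x0)" if yW: "y \<in> W" "vx y < t2" for y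
    proof -
      have yU: "y \<in> U" and yW0: "y \<in> W0" using yW by (auto simp: W_def)
      have vy: "t1 < v y" "v y < t2" using yW0 by (auto simp: W0_def)
      have "v y \<le> vx y" using vxge yU by blast
      then have "\<psi> (v y) \<le> \<psi> (vx y)" using \<psi>mono[of "v y" "vx y"] vy yW(2) by simp
      moreover have "ux y \<le> u y" using uxle yU by blast
      moreover have "\<Phi> y \<le> \<Phi> x0" using x0(2) W0K yW0 by blast
      ultimately show ?thesis using ux0 vx0 by (simp add: \<Phi>_def)
    qed
    have lt: "vx x0 < t2" using vx0 x0s by simp
    note li = local_ineq[OF atlas metric oW x0W WU smu smv d\<psi> d\<psi>1 lt mx, where T=T and m=m]
    have L1: "Lop A g T m Q ux x0 \<le> p^3 * Lop A g T m Q vx x0 + p^2 * (- 2 * \<delta>) * Tgrad_sq A g T m vx x0"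
      using li(1)[of Q] vx0 by (simp add: p_def \<psi>2_def)
    have S1: "Tgrad_sq A g T m ux x0 = p^4 * Tgrad_sq A g T m vx x0"
      using li(2) vx0 by (simp add: p_def)
    show False
      by (rule final_arith[OF X p c e_def L1 X_def S1 Lu Lv Sc])
  qed
  show ?thesis unfolding M_def[symmetric] I_def[symmetric]
  proof (rule convex_onI[OF _ convI])
    fix t x y :: real assume t: "0 < t" "t < 1" and xI: "x \<in> I" and yI: "y \<in> I"
    show "M ((1 - t) *\<^sub>R x + t *\<^sub>R y) \<le> (1 - t) * M x + t * M y"
    proof (cases x y rule: linorder_cases)
      case less
      define t0 where "t0 = (1 - t) * x + t * y"
      have e1: "t0 - x = t * (y - x)" unfolding t0_def by (simp add: algebra_simps)
      have e2: "y - t0 = (1 - t) * (y - x)" unfolding t0_def by (simp add: algebra_simps)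
      have p1: "t * (y - x) > 0" using t less by simp
      have p2: "(1 - t) * (y - x) > 0" using t less by simp
      have "x < t0" using e1 p1 by linarith
      moreover have "t0 < y" using e2 p2 by linarith
      ultimately have "x < t0" "t0 < y" by auto
      then have H: "M t0 \<le> (1 - t) * M x + t * M y"
        by (rule conv_from_key[OF less t0_def key[OF xI yI]])
      have "(1 - t) *\<^sub>R x + t *\<^sub>R y = t0" by (simp add: t0_def)
      then show ?thesis using H by simp
    next
      case equal
      then show ?thesis by (simp add: algebra_simps)
    next
      case greater
      define t0 where "t0 = (1 - (1 - t)) * y + (1 - t) * x"
      have e1: "t0 - y = (1 - t) * (x - y)" unfolding t0_def by (simp add: algebra_simps)
      have e2: "x - t0 = t * (x - y)" unfolding t0_def by (simp add: algebra_simps)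
      have p1: "t * (x - y) > 0" using t greater by simp
      have p2: "(1 - t) * (x - y) > 0" using t greater by simp
      have "y < t0" using e1 p2 by linarith
      moreover have "t0 < x" using e2 p1 by linarith
      ultimately have "y < t0" "t0 < x" by auto
      then have H: "M t0 \<le> (1 - (1 - t)) * M y + (1 - t) * M x"
        by (rule conv_from_key[OF greater t0_def key[OF yI xI]])
      have "(1 - t) *\<^sub>R x + t *\<^sub>R y = t0" by (simp add: t0_def algebra_simps)
      then show ?thesis using H by (simp add: algebra_simps)
    qed
  qed
qed

end
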